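(* Let $f=(a,b,c,d)$ be a reduced binary cubic form over $\mathbb{F}_q[t]$ of discriminant $D$ with imaginary or unusual Hessian $(P,Q,R)$. Then $|a|\le|D|^{1/4}$, $|b|\le|D|^{1/4}$, $|bc|\le|D|^{1/2}$ and $|ad|\le|D|^{1/2}$.
   Context: $\mathbb{F}_q$ is a finite field with $\gcd(q,6)=1$; $|H|=q^{\deg H}$ for nonzero $H\in\mathbb{F}_q[t]$, $|0|=0$, $\mathrm{sgn}(H)$ = leading coefficient. A binary cubic form $(a,b,c,d)=ax^3+bx^2y+cxy^2+dy^3$ over $\mathbb{F}_q[t]$ has discriminant $D=18abcd+b^2c^2-4ac^3-4b^3d-27a^2d^2$ and Hessian $H_f=(P,Q,R)$, $P=b^2-3ac$, $Q=bc-9ad$, $R=c^2-3bd$, of discriminant $-3D$. $\Delta$ is imaginary if $\deg\Delta$ odd, unusual if $\deg\Delta$ even and $\mathrm{sgn}(\Delta)$ a non-square in $\mathbb{F}_q^*$. Fix a primitive root $h$ of $\mathbb{F}_q^*$, $S=\{h^i:0\le i\le (q-3)/2\}$; assume $\mathrm{sgn}(-3D)\in\{1,h\}$ and $f$ primitive, irreducible. A binary quadratic form $(A,B,C)$ is partially reduced if $|B|<|A|\le|C|$; if $|A|<|C|$ then $\mathrm{sgn}(A)\in\{1,h\}$, if $|A|=|C|$ then $\mathrm{sgn}(A)=1$; and $B\ne0$ implies $\mathrm{sgn}(B)\in S$; it is reduced if partially reduced and either $|A|<|C|$ or it is lexicographically smallest among partially reduced forms in its equivalence class (equivalence via matrices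 over $\mathbb{F}_q[t]$ with determinant in $\mathbb{F}_q^*$, acting by $(f\circ M)(x,y)=f(\alpha x+\beta y,\gamma x+\delta y)$). A cubic form $f$ is reduced if $H_f$ is reduced, $\mathrm{sgn}(a)\in S$, $Q=0$ implies $\mathrm{sgn}(d)\in S$, and, when $H_f$ is unusual, $f$ is lexicographically smallest among all equivalent cubic forms with the same Hessian satisfying these conditions. *)

theory Defs
  imports Complex_Main "HOL-Computational_Algebra.Polynomial"
begin

type_synonym 'a qform = "'a \<times> 'a \<times> 'a"
type_synonym 'a cform = "'a \<times> 'a \<times> 'a \<times> 'a"

definition absv :: "'a::{field,finite} poly \<Rightarrow> nat" where
  "absv H = (if H = 0 then 0 else card (UNIV :: 'a set) ^ degree H)"

definition primitive_root :: "'a::{field,finite} \<Rightarrow> bool" where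
  "primitive_root h \<longleftrightarrow> h \<noteq> 0 \<and> (\<forall>x. x \<noteq> 0 \<longrightarrow> (\<exists>i::nat. x = h ^ i))"

definition Sset :: "'a::{field,finite} \<Rightarrow> 'a set" where
  "Sset h = {h ^ i | i. i \<le> (card (UNIV :: 'a set) - 3) div 2}"

definition cubic_disc :: "'a::comm_ring_1 cform \<Rightarrow> 'a" where
  "cubic_disc f = (case f of (a, b, c, d) \<Rightarrow>
     18*a*b*c*d + b^2*c^2 - 4*a*c^3 - 4*b^3*d - 27*a^2*d^2)"

definition hessian :: "'a::comm_ring_1 cform \<Rightarrow> 'a qform" where
  "hessian f = (case f of (a, b, c, d) \<Rightarrow> (b^2 - 3*a*c, b*c - 9*a*d, c^2 - 3*b*d))"

definition quad_disc :: "'a::comm_ring_1 qform \<Rightarrow> 'a" where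
  "quad_disc F = (case F of (A, B, C) \<Rightarrow> B^2 - 4*A*C)"

definition imaginary :: "'a::field poly \<Rightarrow> bool" where
  "imaginary \<Delta> \<longleftrightarrow> odd (degree \<Delta>)"

definition unusual :: "'a::field poly \<Rightarrow> bool" where
  "unusual \<Delta> \<longleftrightarrow> even (degree \<Delta>) \<and> \<not> (\<exists>x. lead_coeff \<Delta> = x * x)"

text \<open>Action (F o M)(x,y) = F(alpha x + beta y, gamma x + delta y).\<close>
definition quad_act :: "'a::comm_ring_1 qform \<Rightarrow> 'a \<Rightarrow> 'a \<Rightarrow> 'a \<Rightarrow> 'a \<Rightarrow> 'a qform" where
  "quad_act F \<alpha> \<beta> \<gamma> \<delta> = (case F of (A, B, C) \<Rightarrow>
     (A*\<alpha>^2 + B*\<alpha>*\<gamma> + C*\<gamma>^2,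
      2*A*\<alpha>*\<beta> + B*(\<alpha>*\<delta> + \<beta>*\<gamma>) + 2*C*\<gamma>*\<delta>,
      A*\<beta>^2 + B*\<beta>*\<delta> + C*\<delta>^2))"

definition cubic_act :: "'a::comm_ring_1 cform \<Rightarrow> 'a \<Rightarrow> 'a \<Rightarrow> 'a \<Rightarrow> 'a \<Rightarrow> 'a cform" where
  "cubic_act f \<alpha> \<beta> \<gamma> \<delta> = (case f of (a, b, c, d) \<Rightarrow>
     (a*\<alpha>^3 + b*\<alpha>^2*\<gamma> + c*\<alpha>*\<gamma>^2 + d*\<gamma>^3,
      3*a*\<alpha>^2*\<beta> + b*(\<alpha>^2*\<delta> + 2*\<alpha>*\<beta>*\<gamma>) + c*(\<beta>*\<gamma>^2 + 2*\<alpha>*\<gamma>*\<delta>) + 3*d*\<gamma>^2*\<delta>,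
      3*a*\<alpha>*\<beta>^2 + b*(2*\<alpha>*\<beta>*\<delta> + \<beta>^2*\<gamma>) + c*(\<alpha>*\<delta>^2 + 2*\<beta>*\<gamma>*\<delta>) + 3*d*\<gamma>*\<delta>^2,
      a*\<beta>^3 + b*\<beta>^2*\<delta> + c*\<beta>*\<delta>^2 + d*\<delta>^3))"

definition admissible :: "'a::field poly \<Rightarrow> 'a poly \<Rightarrow> 'a poly \<Rightarrow> 'a poly \<Rightarrow> bool" where
  "admissible \<alpha> \<beta> \<gamma> \<delta> \<longleftrightarrow> (\<exists>u. u \<noteq> 0 \<and> \<alpha>*\<delta> - \<beta>*\<gamma> = [:u:])"

definition quad_equiv :: "'a::field poly qform \<Rightarrow> 'a poly qform \<Rightarrow> bool" where
  "quad_equiv F G \<longleftrightarrow> (\<exists>\<alpha> \<beta> \<gamma> \<delta>. admissible \<alpha> \<beta> \<gamma> \<delta> \<and> G = quad_act F \<alpha> \<beta> \<gamma> \<delta>)"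

definition cubic_equiv :: "'a::field poly cform \<Rightarrow> 'a poly cform \<Rightarrow> bool" where
  "cubic_equiv f g \<longleftrightarrow> (\<exists>\<alpha> \<beta> \<gamma> \<delta>. admissible \<alpha> \<beta> \<gamma> \<delta> \<and> g = cubic_act f \<alpha> \<beta> \<gamma> \<delta>)"

definition lex_le :: "('b \<Rightarrow> 'b \<Rightarrow> bool) \<Rightarrow> 'b list \<Rightarrow> 'b list \<Rightarrow> bool" where
  "lex_le lt xs ys \<longleftrightarrow> xs = ys \<or> (xs, ys) \<in> lexord {(x, y). lt x y}"

definition partially_reduced :: "'a::{field,finite} \<Rightarrow> 'a poly qform \<Rightarrow> bool" where
  "partially_reduced h F = (case F of (A, B, C) \<Rightarrow>
     absv B < absv A \<and> absv A \<le> absv C \<and>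
     (absv A < absv C \<longrightarrow> lead_coeff A \<in> {1, h}) \<and>
     (absv A = absv C \<longrightarrow> lead_coeff A = 1) \<and>
     (B \<noteq> 0 \<longrightarrow> lead_coeff B \<in> Sset h))"

definition reduced_quad :: "('a::{field,finite} poly \<Rightarrow> 'a poly \<Rightarrow> bool) \<Rightarrow> 'a \<Rightarrow> 'a poly qform \<Rightarrow> bool" where
  "reduced_quad lt h F = (case F of (A, B, C) \<Rightarrow>
     partially_reduced h F \<and>
     (absv A < absv C \<or>
      (\<forall>G. partially_reduced h G \<and> quad_equiv F G \<longrightarrow>
         lex_le lt [A, B, C] [fst G, fst (snd G), snd (snd G)])))"

definition cubic_conds :: "('a::{field,finite} poly \<Rightarrow> 'a poly \<Rightarrow> bool) \<Rightarrow> 'a \<Rightarrow> 'a poly cform \<Rightarrow> bool" where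
  "cubic_conds lt h f = (case f of (a, b, c, d) \<Rightarrow>
     reduced_quad lt h (hessian f) \<and> lead_coeff a \<in> Sset h \<and>
     (fst (snd (hessian f)) = 0 \<longrightarrow> lead_coeff d \<in> Sset h))"

definition reduced_cubic :: "('a::{field,finite} poly \<Rightarrow> 'a poly \<Rightarrow> bool) \<Rightarrow> 'a \<Rightarrow> 'a poly cform \<Rightarrow> bool" where
  "reduced_cubic lt h f = (case f of (a, b, c, d) \<Rightarrow>
     cubic_conds lt h f \<and>
     (unusual (quad_disc (hessian f)) \<longrightarrow>
       (\<forall>g. cubic_equiv f g \<and> hessian g = hessian f \<and> cubic_conds lt h g \<longrightarrow>
          (case g of (a', b', c', d') \<Rightarrow> lex_le lt [a, b, c, d] [a', b', c', d']))))"

definition primitive_cubic :: "'a::field poly cform \<Rightarrow> bool" where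
  "primitive_cubic f = (case f of (a, b, c, d) \<Rightarrow>
     (\<forall>g. g dvd a \<and> g dvd b \<and> g dvd c \<and> g dvd d \<longrightarrow> is_unit g))"

text \<open>Irreducible: nonzero and not a product of a linear form (e x + g y) and a
  quadratic form (A x^2 + B x y + C y^2) with coefficients in F_q[t].\<close>
definition irreducible_cubic :: "'a::field poly cform \<Rightarrow> bool" where
  "irreducible_cubic f = (case f of (a, b, c, d) \<Rightarrow>
     (a, b, c, d) \<noteq> (0, 0, 0, 0) \<and>
     \<not> (\<exists>e g A B C. a = e*A \<and> b = e*B + g*A \<and> c = e*C + g*B \<and> d = g*C))"

end

theory Submission imports Defs "HOL-Number_Theory.Residues" begin

lemma char_ne:
  assumes q: "coprime (card (UNIV :: 'a::{field,finite} set)) 6"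
  shows "(2::'a) \<noteq> 0" "(3::'a) \<noteq> 0"
proof -
  have dv: "CHAR('a) dvd card (UNIV :: 'a set)" by (rule CHAR_dvd_CARD)
  have c1: "CHAR('a) \<noteq> 1" by (metis dvd_refl of_nat_1 of_nat_eq_0_iff_char_dvd one_neq_zero)
  show "(2::'a) \<noteq> 0"
  proof
    assume "(2::'a) = 0"
    hence "of_nat 2 = (0::'a)" by simp
    hence "CHAR('a) dvd 2" by (simp only: of_nat_eq_0_iff_char_dvd)
    moreover have "(2::nat) dvd 6" by simp
    ultimately have "CHAR('a) dvd 6" by (rule dvd_trans)
    hence "CHAR('a) dvd gcd (card (UNIV :: 'a set)) 6" using dv by simp
    with q c1 show False by simp
  qed
  show "(3::'a) \<noteq> 0"
  proof
    assume "(3::'a) = 0"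
    hence "of_nat 3 = (0::'a)" by simp
    hence "CHAR('a) dvd 3" by (simp only: of_nat_eq_0_iff_char_dvd)
    moreover have "(3::nat) dvd 6" by simp
    ultimately have "CHAR('a) dvd 6" by (rule dvd_trans)
    hence "CHAR('a) dvd gcd (card (UNIV :: 'a set)) 6" using dv by simp
    with q c1 show False by simp
  qed
qed


lemma aniso:
  fixes P K S u v :: "'a::field poly"
  assumes P: "P \<noteq> 0" and S: "S \<noteq> 0"
    and K: "K \<noteq> 0 \<Longrightarrow> 2 * degree K < degree P + degree S"
    and nc: "u \<noteq> 0 \<Longrightarrow> v \<noteq> 0 \<Longrightarrow> degree P + 2 * degree u = degree S + 2 * degree v \<Longrightarrow>
       lead_coeff P * (lead_coeff u)^2 + lead_coeff S * (lead_coeff v)^2 \<noteq> 0"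
    and X: "X = P*u^2 + K*u*v + S*v^2"
  shows "u \<noteq> 0 \<Longrightarrow> X \<noteq> 0 \<and> degree P + 2 * degree u \<le> degree X"
    and "v \<noteq> 0 \<Longrightarrow> X \<noteq> 0 \<and> degree S + 2 * degree v \<le> degree X"
proof -
  have main: "X \<noteq> 0 \<and> degree X = max (degree P + 2 * degree u) (degree S + 2 * degree v)"
    if u: "u \<noteq> 0" and v: "v \<noteq> 0"
  proof -
    define A where "A = P*u^2"
    define C where "C = S*v^2"
    define B where "B = K*u*v"
    have dA: "degree A = degree P + 2 * degree u" and A0: "A \<noteq> 0"
      using P u by (auto simp: A_def degree_mult_eq degree_power_eq)
    have dC: "degree C = degree S + 2 * degree v" and C0: "C \<noteq> 0"
      using S v by (auto simp: C_def degree_mult_eq degree_power_eq)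
    define M where "M = max (degree A) (degree C)"
    have AC: "A + C \<noteq> 0 \<and> degree (A + C) = M"
    proof (cases "degree A = degree C")
      case True
      have le: "degree (A + C) \<le> M" unfolding M_def by (rule degree_add_le_max)
      have "Polynomial.coeff (A + C) M = lead_coeff A + lead_coeff C" using True by (simp add: M_def)
      also have "\<dots> = lead_coeff P * (lead_coeff u)^2 + lead_coeff S * (lead_coeff v)^2"
        by (simp add: A_def C_def lead_coeff_mult lead_coeff_power)
      also have "\<dots> \<noteq> 0" using nc u v True dA dC by simp
      finally have "Polynomial.coeff (A + C) M \<noteq> 0" .
      hence "A + C \<noteq> 0" by (metis coeff_0)
      from \<open>Polynomial.coeff (A + C) M \<noteq> 0\<close> have "M \<le> degree (A + C)" by (rule le_degree)
      with le \<open>A + C \<noteq> 0\<close> show ?thesis by simp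
    next
      case False
      show ?thesis
      proof (cases "degree A < degree C")
        case True
        hence d: "degree (A + C) = degree C" by (rule degree_add_eq_right)
        have "A + C \<noteq> 0" using d True by (metis degree_0 not_less_zero)
        with d True show ?thesis unfolding M_def by auto
      next
        case F2: False
        with False have "degree C < degree A" by simp
        hence d: "degree (A + C) = degree A" by (rule degree_add_eq_left)
        have "A + C \<noteq> 0" using d \<open>degree C < degree A\<close> by (metis degree_0 not_less_zero)
        with d F2 show ?thesis unfolding M_def by auto
      qed
    qed
    have XB: "X = (A + C) + B" unfolding X A_def B_def C_def by (simp add: algebra_simps)
    have "degree (A + C + B) = degree (A + C)"
    proof (cases "K = 0")
      case True thus ?thesis by (simp add: B_def)
    next
      case False
      have "degree B = degree K + degree u + degree v"
        using False u v by (simp add: B_def degree_mult_eq)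
      with K[OF False] dA dC have "degree B < M" unfolding M_def by linarith
      with AC show ?thesis by (simp add: degree_add_eq_left)
    qed
    moreover have "A + C + B \<noteq> 0"
    proof
      assume "A + C + B = 0"
      hence "A + C = - B" by (simp add: eq_neg_iff_add_eq_0)
      hence "degree (A + C) = degree B" by simp
      moreover have "K \<noteq> 0" using \<open>A + C = -B\<close> AC by (auto simp: B_def)
      moreover have "degree B = degree K + degree u + degree v"
        using \<open>K \<noteq> 0\<close> u v by (simp add: B_def degree_mult_eq)
      ultimately show False using K dA dC AC unfolding M_def by linarith
    qed
    ultimately show ?thesis using XB AC dA dC M_def by simp
  qed
  show "u \<noteq> 0 \<Longrightarrow> X \<noteq> 0 \<and> degree P + 2 * degree u \<le> degree X"
  proof -
    assume u: "u \<noteq> 0"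
    show ?thesis
    proof (cases "v = 0")
      case True
      hence "X = P*u^2" by (simp add: X)
      thus ?thesis using P u by (simp add: degree_mult_eq degree_power_eq)
    next
      case False thus ?thesis using main[OF u False] by simp
    qed
  qed
  show "v \<noteq> 0 \<Longrightarrow> X \<noteq> 0 \<and> degree S + 2 * degree v \<le> degree X"
  proof -
    assume v: "v \<noteq> 0"
    show ?thesis
    proof (cases "u = 0")
      case True
      hence "X = S*v^2" by (simp add: X)
      thus ?thesis using S v by (simp add: degree_mult_eq degree_power_eq)
    next
      case False thus ?thesis using main[OF False v] by simp
    qed
  qed
qed


lemma sq_lemma:
  fixes p r x y :: "'a::field"
  assumes "p*x^2 + 9*r*y^2 = 0" "x \<noteq> 0"
  shows "-4*p*r = (6*r*y/x)*(6*r*y/x)"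
proof -
  have e: "p*x^2 = -(9*r*y^2)" using assms(1) by (simp add: eq_neg_iff_add_eq_0)
  have x2: "x^2 \<noteq> 0" using assms(2) by simp
  have "-4*p*r = (-4*r*(p*x^2))/x^2" using x2 by (simp add: divide_simps)
  also have "\<dots> = (36*r^2*y^2)/x^2" unfolding e by (simp add: power2_eq_square)
  also have "\<dots> = (6*r*y/x)*(6*r*y/x)" by (simp add: power2_eq_square)
  finally show ?thesis .
qed

lemma card_ge2: "2 \<le> card (UNIV :: 'a::{field,finite} set)"
proof -
  have "card {0::'a, 1} \<le> card (UNIV :: 'a set)" by (rule card_mono) auto
  thus ?thesis by simp
qed

lemma absv_le_powr:
  fixes X :: "'a::{field,finite} poly"
  assumes "X \<noteq> 0 \<Longrightarrow> k * degree X \<le> n" "k > 0"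
  shows "real (absv X) \<le> real (card (UNIV::'a set) ^ n) powr (1 / real k)"
proof (cases "X = 0")
  case True thus ?thesis by (simp add: absv_def)
next
  case False
  define q where "q = real (card (UNIV::'a set))"
  have q1: "1 \<le> q" using card_ge2[where 'a='a] by (simp add: q_def)
  have "real (absv X) = q powr real (degree X)"
    using False q1 by (simp add: absv_def q_def powr_realpow)
  also have "\<dots> \<le> q powr (real n / real k)"
    using assms False q1 by (intro powr_mono) (auto simp: field_simps simp flip: of_nat_mult)
  also have "\<dots> = (q powr real n) powr (1 / real k)" by (simp add: powr_powr)
  also have "q powr real n = real (card (UNIV::'a set) ^ n)"
    using q1 by (simp add: q_def powr_realpow)
  finally show ?thesis .
qed


theorem mainTheorem10:
  fixes a b c d :: "'a::{field,finite} poly"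
    and h :: 'a
    and le lt :: "'a poly \<Rightarrow> 'a poly \<Rightarrow> bool"
  assumes q: "coprime (card (UNIV :: 'a set)) 6"
    and ord: "class.linorder le lt"
    and h: "primitive_root h"
    and sgn: "lead_coeff (- 3 * cubic_disc (a, b, c, d)) \<in> {1, h}"
    and prim: "primitive_cubic (a, b, c, d)"
    and irr: "irreducible_cubic (a, b, c, d)"
    and red: "reduced_cubic lt h (a, b, c, d)"
    and hess: "imaginary (quad_disc (hessian (a, b, c, d))) \<or>
               unusual (quad_disc (hessian (a, b, c, d)))"
  shows "real (absv a) \<le> real (absv (cubic_disc (a, b, c, d))) powr (1/4)
       \<and> real (absv b) \<le> real (absv (cubic_disc (a, b, c, d))) powr (1/4)
       \<and> real (absv (b * c)) \<le> real (absv (cubic_disc (a, b, c, d))) powr (1/2)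
       \<and> real (absv (a * d)) \<le> real (absv (cubic_disc (a, b, c, d))) powr (1/2)"
proof -
  define P where "P = b^2 - 3*a*c"
  define Q where "Q = b*c - 9*a*d"
  define R where "R = c^2 - 3*b*d"
  define D where "D = cubic_disc (a, b, c, d)"
  define \<Delta> where "\<Delta> = Q^2 - 4*P*R"
  define q where "q = card (UNIV :: 'a set)"
  have q2: "2 \<le> q" unfolding q_def by (rule card_ge2)
  have two: "(2::'a) \<noteq> 0" and three: "(3::'a) \<noteq> 0" using char_ne[OF q] by auto
  have "(2::'a)*2 \<noteq> 0" using two by (metis mult_eq_0_iff)
  hence four: "(4::'a) \<noteq> 0" by simp
  have "(3::'a)*3 \<noteq> 0" using three by (metis mult_eq_0_iff)
  hence nine: "(9::'a) \<noteq> 0" by simp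
  have H: "hessian (a, b, c, d) = (P, Q, R)" by (simp add: hessian_def P_def Q_def R_def)
  from red have "reduced_quad lt h (P, Q, R)"
    by (simp add: reduced_cubic_def cubic_conds_def H)
  hence pr: "absv Q < absv P" "absv P \<le> absv R"
    by (simp_all add: reduced_quad_def partially_reduced_def)
  have P0: "P \<noteq> 0" using pr(1) by (auto simp: absv_def)
  have R0: "R \<noteq> 0" using pr P0 by (auto simp: absv_def split: if_splits)
  have dQ: "Q \<noteq> 0 \<Longrightarrow> degree Q < degree P"
    using pr(1) P0 q2 by (auto simp: absv_def q_def[symmetric] split: if_splits)
  have dPR: "degree P \<le> degree R"
    using pr(2) P0 R0 q2 by (auto simp: absv_def q_def[symmetric] split: if_splits)
  have m4: "-4*P*R = Polynomial.smult (-4) (P*R)" by (simp add: numeral_poly)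
  have d4: "degree (-4*P*R) = degree P + degree R" unfolding m4 using four P0 R0
    by (simp add: degree_mult_eq)
  have l4: "lead_coeff (-4*P*R) = -4 * lead_coeff P * lead_coeff R" unfolding m4
    by (simp add: lead_coeff_mult)
  have DeltaS: "\<Delta> = -4*P*R + Q^2" by (simp add: \<Delta>_def)
  have dl: "degree \<Delta> = degree P + degree R \<and> lead_coeff \<Delta> = -4 * lead_coeff P * lead_coeff R"
  proof (cases "Q = 0")
    case True
    hence "\<Delta> = -4*P*R" by (simp add: \<Delta>_def)
    thus ?thesis using d4 l4 by simp
  next
    case False
    have dQ2: "degree (Q^2) < degree (-4*P*R)"
      using dQ[OF False] d4 dPR False by (simp add: degree_power_eq)
    show ?thesis
      using degree_add_eq_left[OF dQ2] lead_coeff_add_le[OF dQ2] d4 l4 DeltaS by simp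
  qed
  have dDelta: "degree \<Delta> = degree P + degree R" using dl by simp
  have lDelta: "lead_coeff \<Delta> = -4 * lead_coeff P * lead_coeff R" using dl by (rule conjunct2)
  have Delta0: "\<Delta> \<noteq> 0" using lDelta four P0 R0 by auto
  have DD0: "\<Delta> = -3 * D"
    by (simp add: \<Delta>_def D_def P_def Q_def R_def cubic_disc_def algebra_simps power2_eq_square power3_eq_cube)
  have DD: "\<Delta> = Polynomial.smult (-3) D" unfolding DD0 by (simp add: numeral_poly)
  have D0: "D \<noteq> 0" using Delta0 DD by auto
  have dD: "degree D = degree P + degree R" using DD three dDelta by simp
  have absD: "absv D = q ^ (degree P + degree R)" using D0 dD by (simp add: absv_def q_def)
  have qd: "quad_disc (hessian (a, b, c, d)) = \<Delta>" by (simp add: H quad_disc_def \<Delta>_def)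
  have hyp: "odd (degree P + degree R) \<or> \<not> (\<exists>x. -4 * lead_coeff P * lead_coeff R = x * x)"
  proof -
    have hyp0: "odd (degree \<Delta>) \<or> \<not> (\<exists>x. lead_coeff \<Delta> = x * x)"
      using hess unfolding qd imaginary_def unusual_def by blast
    from hyp0 show ?thesis unfolding lDelta unfolding dDelta .
  qed
  have m3: "-3*Q = Polynomial.smult (-3) Q" by (simp add: numeral_poly)
  have m9P: "9*P = Polynomial.smult 9 P" by (simp add: numeral_poly)
  have m9R: "9*R = Polynomial.smult 9 R" by (simp add: numeral_poly)
  have K: "-3*Q \<noteq> 0 \<Longrightarrow> 2 * degree (-3*Q) < degree P + degree (9*R)"
    and K': "-3*Q \<noteq> 0 \<Longrightarrow> 2 * degree (-3*Q) < degree R + degree (9*P)"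
    using dQ dPR three nine unfolding m3 m9P m9R by fastforce+
  have id1: "P*P = P*b^2 + (-3*Q)*b*a + (9*R)*a^2"
    by (simp add: P_def Q_def R_def algebra_simps power2_eq_square)
  have id2: "R*R = R*c^2 + (-3*Q)*c*d + (9*P)*d^2"
    by (simp add: P_def Q_def R_def algebra_simps power2_eq_square)
  have nc1: "lead_coeff P * (lead_coeff b)^2 + lead_coeff (9*R) * (lead_coeff a)^2 \<noteq> 0"
    if "b \<noteq> 0" "a \<noteq> 0" "degree P + 2 * degree b = degree (9*R) + 2 * degree a"
  proof
    assume e: "lead_coeff P * (lead_coeff b)^2 + lead_coeff (9*R) * (lead_coeff a)^2 = 0"
    have e': "lead_coeff P * (lead_coeff b)^2 + 9 * lead_coeff R * (lead_coeff a)^2 = 0"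
      using e nine unfolding m9R by simp
    have "degree P + 2*degree b = degree R + 2*degree a" using that(3) nine unfolding m9R by simp
    hence "even (degree P + degree R)" by presburger
    with hyp have ns: "\<not> (\<exists>x. -4 * lead_coeff P * lead_coeff R = x * x)" by simp
    have lb: "lead_coeff b \<noteq> 0" using that(1) by simp
    from sq_lemma[OF e' lb] ns show False by blast
  qed
  have nc2: "lead_coeff R * (lead_coeff c)^2 + lead_coeff (9*P) * (lead_coeff d)^2 \<noteq> 0"
    if "c \<noteq> 0" "d \<noteq> 0" "degree R + 2 * degree c = degree (9*P) + 2 * degree d"
  proof
    assume e: "lead_coeff R * (lead_coeff c)^2 + lead_coeff (9*P) * (lead_coeff d)^2 = 0"
    have e': "lead_coeff R * (lead_coeff c)^2 + 9 * lead_coeff P * (lead_coeff d)^2 = 0"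
      using e nine unfolding m9P by simp
    have "degree R + 2*degree c = degree P + 2*degree d" using that(3) nine unfolding m9P by simp
    hence "even (degree P + degree R)" by presburger
    with hyp have ns: "\<not> (\<exists>x. -4 * lead_coeff P * lead_coeff R = x * x)" by simp
    have lc: "lead_coeff c \<noteq> 0" using that(1) by simp
    have eq: "-4 * lead_coeff R * lead_coeff P = (6*lead_coeff P*lead_coeff d/lead_coeff c)*(6*lead_coeff P*lead_coeff d/lead_coeff c)"
      by (rule sq_lemma[OF e' lc])
    have "-4 * lead_coeff P * lead_coeff R = -4 * lead_coeff R * lead_coeff P" by (simp add: ac_simps)
    hence "-4 * lead_coeff P * lead_coeff R = (6*lead_coeff P*lead_coeff d/lead_coeff c)*(6*lead_coeff P*lead_coeff d/lead_coeff c)"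
      using eq by (rule trans)
    thus False using ns by blast
  qed
  have S1: "9*R \<noteq> 0" and S2: "9*P \<noteq> 0" using nine P0 R0 unfolding m9P m9R by auto
  have dS1: "degree (9*R) = degree R" and dS2: "degree (9*P) = degree P"
    using nine unfolding m9P m9R by auto
  have dPP: "degree (P*P) = 2 * degree P" using P0 by (simp add: degree_mult_eq)
  have dRR: "degree (R*R) = 2 * degree R" using R0 by (simp add: degree_mult_eq)
  have b1: "degree P + 2 * degree b \<le> 2 * degree P" if b: "b \<noteq> 0"
  proof -
    have "P*P \<noteq> 0 \<and> degree P + 2 * degree b \<le> degree (P*P)"
      by (rule aniso(1)[OF P0 S1 K nc1 id1 b])
    thus ?thesis using dPP by simp
  qed
  have a1: "degree R + 2 * degree a \<le> 2 * degree P" if a: "a \<noteq> 0"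
  proof -
    have "P*P \<noteq> 0 \<and> degree (9*R) + 2 * degree a \<le> degree (P*P)"
      by (rule aniso(2)[OF P0 S1 K nc1 id1 a])
    thus ?thesis using dPP dS1 by simp
  qed
  have c1: "degree R + 2 * degree c \<le> 2 * degree R" if c: "c \<noteq> 0"
  proof -
    have "R*R \<noteq> 0 \<and> degree R + 2 * degree c \<le> degree (R*R)"
      by (rule aniso(1)[OF R0 S2 K' nc2 id2 c])
    thus ?thesis using dRR by simp
  qed
  have d1: "degree P + 2 * degree d \<le> 2 * degree R" if d: "d \<noteq> 0"
  proof -
    have "R*R \<noteq> 0 \<and> degree (9*P) + 2 * degree d \<le> degree (R*R)"
      by (rule aniso(2)[OF R0 S2 K' nc2 id2 d])
    thus ?thesis using dRR dS2 by simp
  qed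
  have g1: "a \<noteq> 0 \<Longrightarrow> 4 * degree a \<le> degree P + degree R" using a1 dPR by linarith
  have g2: "b \<noteq> 0 \<Longrightarrow> 4 * degree b \<le> degree P + degree R" using b1 dPR by linarith
  have g3: "b * c \<noteq> 0 \<Longrightarrow> 2 * degree (b*c) \<le> degree P + degree R"
    using b1 c1 by (auto simp: degree_mult_eq)
  have g4: "a * d \<noteq> 0 \<Longrightarrow> 2 * degree (a*d) \<le> degree P + degree R"
    using a1 d1 by (auto simp: degree_mult_eq)
  have e1: "real (absv a) \<le> real (q ^ (degree P + degree R)) powr (1 / real (4::nat))"
    unfolding q_def by (rule absv_le_powr[OF g1]) simp_all
  have e2: "real (absv b) \<le> real (q ^ (degree P + degree R)) powr (1 / real (4::nat))"
    unfolding q_def by (rule absv_le_powr[OF g2]) simp_all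
  have e3: "real (absv (b*c)) \<le> real (q ^ (degree P + degree R)) powr (1 / real (2::nat))"
    unfolding q_def by (rule absv_le_powr[OF g3]) simp_all
  have e4: "real (absv (a*d)) \<le> real (q ^ (degree P + degree R)) powr (1 / real (2::nat))"
    unfolding q_def by (rule absv_le_powr[OF g4]) simp_all
  have r4: "1 / real (4::nat) = 1/4" and r2: "1 / real (2::nat) = 1/2" by simp_all
  show ?thesis
    unfolding D_def[symmetric] absD using e1 e2 e3 e4 unfolding r4 r2 by blast
qed

end
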